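(* Assume the matching setting described in the context. (a) For every matching $M=\{e_1,\ldots,e_k\}$, every $\sigma\in\Omega$ and every ordering of $M$, the iterates $\sigma_0=\sigma$, $\sigma_i=\hat\psi(\{e_i\},\sigma_{i-1})$ satisfy $\{e_1,\ldots,e_i\}\subseteq\sigma_i$ for all $i\in[k]$. In particular $M\subseteq\hat\psi(M,\sigma)$. (b) For every $\sigma\in\Omega$ and all matchings $M,M'$ with $M\cup M'$ a matching, $\hat\psi(M,\hat\psi(M',\sigma))=\hat\psi(M',\hat\psi(M,\sigma))$. Consequently, the resampling oracles $\rho$ defined from $\psi$ are weakly commutative with respect to $\sim$. (c) $(F,\sim)$ is a potential causality graph for these resampling oracles.
   Context: Let $G=(V,E)$ be an undirected graph with $|V|=2n$ of one of the following two types: [P1] $G$ is the complete graph on $V$; [P2] $V$ is partitioned into sets $A_1,B_1,\ldots,A_r,B_r$ with $|A_i|=|B_i|$, and $E=\{\{u,v\}:u\in A_i,v\in B_i,i\in[r]\}$. In both cases $G$ has the property that whenever $(u',u,v,v')$ is a path in $G$ with distinct nodes, $\{u',v'\}\in E$. $\Omega$ is the set of perfect matchings of $G$ (each viewed as a set of edges), and $\mathcal{M}$ is the set of all matchings of $G$. For $M\in\mathcal{M}$ let $f_M=\{\sigma\in\Omega:M\subseteq\sigma\}$. The flaw set $F$ is any set of flaws of the form $f_M$, $M\in\mathcal{M}$, each nonempty. Define $f_M\sim f_{M'}$ iff $M\cup M'$ is not a matching or $M=M'$. Map $\hat\psi:\mathcal{M}\times\Omega\to\Omega$. For a single edge $e=\{u,v\}$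 let $u',v'$ be the nodes with $\{u,u'\},\{v,v'\}\in\sigma$, and set $\hat\psi(\{e\},\sigma)=(\sigma\setminus\{\{u,u'\},\{v,v'\}\})\cup\{\{u,v\},\{u',v'\}\}$; this equals $\sigma$ if $e\in\sigma$. For $M=\{e_1,\ldots,e_k\}$ (with $\hat\psi(\varnothing,\sigma)=\sigma$), set $\sigma_0=\sigma$, $\sigma_i=\hat\psi(\{e_i\},\sigma_{i-1})$ and $\hat\psi(M,\sigma)=\sigma_k$; the result does not depend on the ordering of $M$. Resampling oracles: for $f_M\in F$ and $\sigma\in f_M$ let $A(f_M,\sigma)=\{\sigma'\in\Omega:\hat\psi(M,\sigma')=\sigma\}$, and let $\rho(\cdot\mid f_M,\sigma)$ be uniform on $A(f_M,\sigma)$. A step $\sigma\xrightarrow{f}\sigma'$ means $\sigma\in f$ and $\sigma'\in A(f,\sigma)$. Weak commutativity w.r.t. $\sim$: there is an injective map sending each two-step walk $\sigma_1\xrightarrow{f}\sigma_2\xrightarrow{g}\sigma_3$ with $f\not\sim g$ to a walk $\sigma_1\xrightarrow{g}\sigma_2'\xrightarrow{f}\sigma_3$. $(F,\sim)$ is a potential causality graph if for every step $\sigma\xrightarrow{f}\sigma'$ one has $\{g\in F:\sigma'\in g\}\subseteq(\{g\in F:\sigma\in g\}\setminus\{f\})\cup\{g:f\sim g\}$. *)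

theory Defs
  imports Main
begin

definition P1_graph :: "'a set \<Rightarrow> 'a set set \<Rightarrow> bool" where
  "P1_graph V E \<longleftrightarrow> E = {{u, v} | u v. u \<in> V \<and> v \<in> V \<and> u \<noteq> v}"

definition P2_graph :: "'a set \<Rightarrow> 'a set set \<Rightarrow> bool" where
  "P2_graph V E \<longleftrightarrow> (\<exists>(r::nat) (A::nat \<Rightarrow> 'a set) (B::nat \<Rightarrow> 'a set).
     (\<forall>i<r. A i \<noteq> {} \<and> B i \<noteq> {} \<and> card (A i) = card (B i)) \<and>
     (\<forall>i<r. \<forall>j<r. A i \<inter> B j = {} \<and> (i \<noteq> j \<longrightarrow> A i \<inter> A j = {} \<and> B i \<inter> B j = {})) \<and>
     V = (\<Union>i<r. A i \<union> B i) \<and>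
     E = {{u, v} | u v i. i < r \<and> u \<in> A i \<and> v \<in> B i})"

definition matching :: "'a set set \<Rightarrow> 'a set set \<Rightarrow> bool" where
  "matching E M \<longleftrightarrow> M \<subseteq> E \<and> (\<forall>e\<in>M. \<forall>e'\<in>M. e \<noteq> e' \<longrightarrow> e \<inter> e' = {})"

definition perfect_matching :: "'a set \<Rightarrow> 'a set set \<Rightarrow> 'a set set \<Rightarrow> bool" where
  "perfect_matching V E \<sigma> \<longleftrightarrow> matching E \<sigma> \<and> \<Union>\<sigma> = V"

definition partner :: "'a set set \<Rightarrow> 'a \<Rightarrow> 'a" where
  "partner \<sigma> u = (THE w. {u, w} \<in> \<sigma>)"

definition psi_edge :: "'a set \<Rightarrow> 'a set set \<Rightarrow> 'a set set" where
  "psi_edge e \<sigma> =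
     (let u = (SOME u. u \<in> e); v = (SOME v. v \<in> e \<and> v \<noteq> u);
          u' = partner \<sigma> u; v' = partner \<sigma> v
      in (\<sigma> - {{u, u'}, {v, v'}}) \<union> {{u, v}, {u', v'}})"

definition psi_list :: "'a set list \<Rightarrow> 'a set set \<Rightarrow> 'a set set" where
  "psi_list es \<sigma> = fold psi_edge es \<sigma>"

definition psi :: "'a set set \<Rightarrow> 'a set set \<Rightarrow> 'a set set" where
  "psi M \<sigma> = psi_list (SOME es. set es = M \<and> distinct es) \<sigma>"

text \<open>Flaws are indexed by matchings M; the flaw is f_M.\<close>
definition flaw :: "'a set \<Rightarrow> 'a set set \<Rightarrow> 'a set set \<Rightarrow> 'a set set set" where
  "flaw V E M = {\<sigma>. perfect_matching V E \<sigma> \<and> M \<subseteq> \<sigma>}"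

definition dep :: "'a set set \<Rightarrow> 'a set set \<Rightarrow> 'a set set \<Rightarrow> bool" where
  "dep E M M' \<longleftrightarrow> \<not> matching E (M \<union> M') \<or> M = M'"

text \<open>Support A(f_M, sigma) of the resampling distribution rho(. | f_M, sigma).\<close>
definition resample_set :: "'a set \<Rightarrow> 'a set set \<Rightarrow> 'a set set \<Rightarrow> 'a set set \<Rightarrow> 'a set set set" where
  "resample_set V E M \<sigma> = {\<sigma>'. perfect_matching V E \<sigma>' \<and> psi M \<sigma>' = \<sigma>}"

definition mstep :: "'a set \<Rightarrow> 'a set set \<Rightarrow> 'a set set \<Rightarrow> 'a set set \<Rightarrow> 'a set set \<Rightarrow> bool" where
  "mstep V E \<sigma> M \<sigma>' \<longleftrightarrow> \<sigma> \<in> flaw V E M \<and> \<sigma>' \<in> resample_set V E M \<sigma>"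

definition weakly_commutative ::
  "('s \<Rightarrow> 'f \<Rightarrow> 's \<Rightarrow> bool) \<Rightarrow> 'f set \<Rightarrow> ('f \<Rightarrow> 'f \<Rightarrow> bool) \<Rightarrow> bool" where
  "weakly_commutative step F D \<longleftrightarrow>
     (let W = {(s1, f, s2, g, s3). f \<in> F \<and> g \<in> F \<and> \<not> D f g \<and> step s1 f s2 \<and> step s2 g s3}
      in \<exists>\<Phi>. inj_on \<Phi> W \<and>
         (\<forall>(s1, f, s2, g, s3) \<in> W. \<exists>s2'. \<Phi> (s1, f, s2, g, s3) = (s1, g, s2', f, s3) \<and>
              step s1 g s2' \<and> step s2' f s3))"

definition potential_causality_graph ::
  "('s \<Rightarrow> 'f \<Rightarrow> 's \<Rightarrow> bool) \<Rightarrow> ('f \<Rightarrow> 's set) \<Rightarrow> 'f set \<Rightarrow> ('f \<Rightarrow> 'f \<Rightarrow> bool) \<Rightarrow> bool" where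
  "potential_causality_graph step fl F D \<longleftrightarrow>
     (\<forall>f\<in>F. \<forall>s s'. step s f s' \<longrightarrow>
        {g \<in> F. s' \<in> fl g} \<subseteq> ({g \<in> F. s \<in> fl g} - {f}) \<union> {g. D f g})"

end

theory Submission imports Defs begin

definition upd :: "('a \<Rightarrow> 'a) \<Rightarrow> 'a \<Rightarrow> 'a \<Rightarrow> 'a \<Rightarrow> 'a" where
 "upd p u v x = (if x = u then v else if x = v then u else if x = p u then p v else if x = p v then p u else p x)"

definition mk :: "'a set \<Rightarrow> ('a \<Rightarrow> 'a) \<Rightarrow> 'a set set" where
 "mk V q = {{x, q x} | x. x \<in> V}"

lemma psi_edge_contains:
  assumes "e = {a, b}" "a \<noteq> b"
  shows "e \<in> psi_edge e \<sigma>"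
proof -
  define u where "u = (SOME u. u \<in> e)"
  define v where "v = (SOME v. v \<in> e \<and> v \<noteq> u)"
  have u: "u \<in> e" unfolding u_def using assms by (metis insertI1 someI)
  have v: "v \<in> e \<and> v \<noteq> u" unfolding v_def using assms u by (smt (verit) insert_iff someI)
  have "{u, v} = e" using u v assms by auto
  then show ?thesis unfolding psi_edge_def Let_def u_def[symmetric] v_def[symmetric] by auto
qed

lemma psi_edge_keeps:
  assumes "e = {a, b}" "a \<noteq> b" "e' \<in> \<sigma>" "e' \<inter> e = {}"
  shows "e' \<in> psi_edge e \<sigma>"
proof -
  define u where "u = (SOME u. u \<in> e)"
  define v where "v = (SOME v. v \<in> e \<and> v \<noteq> u)"
  have u: "u \<in> e" unfolding u_def using assms by (metis insertI1 someI)
  have v: "v \<in> e \<and> v \<noteq> u" unfolding v_def using assms u by (smt (verit) insert_iff someI)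
  have "e' \<noteq> {u, partner \<sigma> u}" "e' \<noteq> {v, partner \<sigma> v}" using u v assms(4) by auto
  then show ?thesis using assms(3) unfolding psi_edge_def Let_def u_def[symmetric] v_def[symmetric] by auto
qed

locale mg =
  fixes V :: "'a set" and E :: "'a set set"
  assumes finV: "finite V"
  and E1: "\<And>e. e \<in> E \<Longrightarrow> \<exists>a b. e = {a, b} \<and> a \<noteq> b \<and> a \<in> V \<and> b \<in> V"
  and E2: "\<And>x u v y. {x, u} \<in> E \<Longrightarrow> {u, v} \<in> E \<Longrightarrow> {v, y} \<in> E \<Longrightarrow> x \<noteq> v \<Longrightarrow> u \<noteq> y \<Longrightarrow> x \<noteq> y
            \<Longrightarrow> {x, y} \<in> E"
begin

abbreviation PM where "PM \<sigma> \<equiv> perfect_matching V E \<sigma>"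

lemma finE: "finite E"
proof -
  have "E \<subseteq> Pow V" using E1 by blast
  then show ?thesis using finV by (meson finite_Pow_iff finite_subset)
qed

lemma pm_edge: "PM \<sigma> \<Longrightarrow> e \<in> \<sigma> \<Longrightarrow> \<exists>a b. e = {a, b} \<and> a \<noteq> b \<and> a \<in> V \<and> b \<in> V"
  unfolding perfect_matching_def matching_def using E1 by blast

lemma pm_uniq:
  assumes "PM \<sigma>" "{x, w} \<in> \<sigma>" "{x, w'} \<in> \<sigma>"
  shows "w = w'"
proof -
  have m: "\<And>e e'. e \<in> \<sigma> \<Longrightarrow> e' \<in> \<sigma> \<Longrightarrow> e \<noteq> e' \<Longrightarrow> e \<inter> e' = {}"
    using assms(1) unfolding perfect_matching_def matching_def by blast
  have "{x, w} \<inter> {x, w'} \<noteq> {}" by blast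
  then have eq: "{x, w} = {x, w'}" using m assms(2,3) by blast
  obtain a b where ab: "{x, w} = {a, b}" "a \<noteq> b" using pm_edge[OF assms(1,2)] by blast
  have "w \<noteq> x" using ab by (auto simp: doubleton_eq_iff)
  then show ?thesis using eq by (auto simp: doubleton_eq_iff)
qed

lemma pm_partner:
  assumes "PM \<sigma>" "x \<in> V"
  shows "{x, partner \<sigma> x} \<in> \<sigma>" "partner \<sigma> x \<noteq> x" "partner \<sigma> x \<in> V"
proof -
  obtain e where e: "e \<in> \<sigma>" "x \<in> e" using assms unfolding perfect_matching_def by blast
  obtain a b where ab: "e = {a, b}" "a \<noteq> b" "a \<in> V" "b \<in> V" using pm_edge[OF assms(1) e(1)] by blast
  obtain w where w: "{x, w} \<in> \<sigma>" "w \<noteq> x" "w \<in> V"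
  proof (cases "x = a")
    case True
    then show ?thesis using that[of b] e ab by blast
  next
    case False
    then have "x = b" using e ab by blast
    then show ?thesis using that[of a] e ab by (simp add: insert_commute)
  qed
  have "\<exists>!w. {x, w} \<in> \<sigma>" using w pm_uniq[OF assms(1)] by blast
  then have "{x, partner \<sigma> x} \<in> \<sigma>" unfolding partner_def by (rule theI')
  moreover then have "partner \<sigma> x = w" using pm_uniq[OF assms(1) _ w(1)] by blast
  ultimately show "{x, partner \<sigma> x} \<in> \<sigma>" "partner \<sigma> x \<noteq> x" "partner \<sigma> x \<in> V" using w by auto
qed

lemma pm_partner_eq:
  assumes "PM \<sigma>" "{x, w} \<in> \<sigma>" shows "partner \<sigma> x = w"
proof -
  have "x \<in> V" using assms unfolding perfect_matching_def by blast
  then show ?thesis using pm_uniq[OF assms(1) pm_partner(1)[OF assms(1)] assms(2)] by simp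
qed

lemma pm_inv: assumes "PM \<sigma>" "x \<in> V" shows "partner \<sigma> (partner \<sigma> x) = x"
proof -
  have "{partner \<sigma> x, x} \<in> \<sigma>" using pm_partner(1)[OF assms] by (simp add: insert_commute)
  then show ?thesis using pm_partner_eq[OF assms(1)] by blast
qed

lemma pm_mk: "PM \<sigma> \<Longrightarrow> \<sigma> = mk V (partner \<sigma>)"
proof
  assume pm: "PM \<sigma>"
  show "\<sigma> \<subseteq> mk V (partner \<sigma>)"
  proof
    fix e assume "e \<in> \<sigma>"
    then obtain a b where ab: "e = {a, b}" "a \<in> V" using pm_edge[OF pm] by blast
    then have "partner \<sigma> a = b" using pm_partner_eq[OF pm] \<open>e \<in> \<sigma>\<close> by blast
    then show "e \<in> mk V (partner \<sigma>)" unfolding mk_def using ab by blast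
  qed
  show "mk V (partner \<sigma>) \<subseteq> \<sigma>" unfolding mk_def using pm_partner(1)[OF pm] by blast
qed

lemma mk_cong: "(\<And>x. x \<in> V \<Longrightarrow> q x = q' x) \<Longrightarrow> mk V q = mk V q'"
  unfolding mk_def by force

definition good where
  "good q \<longleftrightarrow> (\<forall>x\<in>V. q x \<in> V \<and> q x \<noteq> x \<and> q (q x) = x \<and> {x, q x} \<in> E)"

lemma mk_pm:
  assumes "good q"
  shows "PM (mk V q)" "\<And>x. x \<in> V \<Longrightarrow> partner (mk V q) x = q x"
proof -
  have g: "\<And>x. x \<in> V \<Longrightarrow> q x \<in> V \<and> q x \<noteq> x \<and> q (q x) = x \<and> {x, q x} \<in> E"
    using assms unfolding good_def by blast
  have m: "matching E (mk V q)" unfolding matching_def mk_def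
  proof (intro conjI ballI impI)
    show "{{x, q x} |x. x \<in> V} \<subseteq> E" using g by blast
    fix e e' assume "e \<in> {{x, q x} |x. x \<in> V}" "e' \<in> {{x, q x} |x. x \<in> V}" "e \<noteq> e'"
    then obtain x y where "e = {x, q x}" "e' = {y, q y}" "x \<in> V" "y \<in> V" by blast
    then show "e \<inter> e' = {}" using g \<open>e \<noteq> e'\<close> by (metis disjoint_iff insert_commute insert_iff singletonD)
  qed
  have u: "\<Union> (mk V q) = V" unfolding mk_def using g by blast
  show pm: "PM (mk V q)" using m u unfolding perfect_matching_def by blast
  fix x assume "x \<in> V"
  then have "{x, q x} \<in> mk V q" unfolding mk_def by blast
  then show "partner (mk V q) x = q x" using pm_partner_eq[OF pm] by blast
qed

lemma pm_good: assumes "PM \<sigma>" shows "good (partner \<sigma>)"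
  unfolding good_def
proof
  fix x assume x: "x \<in> V"
  have "{x, partner \<sigma> x} \<in> E" using pm_partner(1)[OF assms x] assms
    unfolding perfect_matching_def matching_def by blast
  then show "partner \<sigma> x \<in> V \<and> partner \<sigma> x \<noteq> x \<and> partner \<sigma> (partner \<sigma> x) = x \<and> {x, partner \<sigma> x} \<in> E"
    using pm_partner[OF assms x] pm_inv[OF assms x] by blast
qed

lemma upd_good:
  assumes "good p" "{u, v} \<in> E" "u \<noteq> v" "u \<in> V" "v \<in> V"
  shows "good (upd p u v)"
proof -
  have g: "\<And>x. x \<in> V \<Longrightarrow> p x \<in> V \<and> p x \<noteq> x \<and> p (p x) = x \<and> {x, p x} \<in> E"
    using assms unfolding good_def by blast
  have pe: "{p u, p v} \<in> E"
  proof (cases "p u = v")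
    case True
    then have "p v = u" using g assms(4) by force
    then show ?thesis using True assms(2) by (simp add: insert_commute)
  next
    case False
    have "p v \<noteq> u" using False g assms(4,5) by force
    have "p u \<noteq> p v" using g assms(3,4,5) by metis
    have "{p u, u} \<in> E" using g assms by (simp add: insert_commute)
    moreover have "{v, p v} \<in> E" using g assms by blast
    ultimately show ?thesis using E2 assms(2) False \<open>p v \<noteq> u\<close> \<open>p u \<noteq> p v\<close> by blast
  qed
  show ?thesis unfolding good_def
  proof
    fix x assume x: "x \<in> V"
    have a: "p (p u) = u" "p (p v) = v" "p (p x) = x" "p u \<noteq> u" "p v \<noteq> v" "p x \<noteq> x"
        "p u \<in> V" "p v \<in> V" "p x \<in> V" "{x, p x} \<in> E"
      using g x assms by auto
    have pv: "p u \<noteq> p v" using a assms(3) by metis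
    have i1: "upd p u v x \<in> V" using a assms unfolding upd_def by auto
    have i2: "upd p u v x \<noteq> x" using a assms unfolding upd_def by auto
    have i3: "upd p u v (upd p u v x) = x" using a assms pv unfolding upd_def by (smt (verit))
    have i4: "{x, upd p u v x} \<in> E"
    proof -
      consider "x = u" | "x \<noteq> u" "x = v" | "x \<noteq> u" "x \<noteq> v" "x = p u" | "x \<noteq> u" "x \<noteq> v" "x \<noteq> p u" "x = p v"
        | "x \<noteq> u" "x \<noteq> v" "x \<noteq> p u" "x \<noteq> p v" by blast
      then show ?thesis
      proof cases
        case 1 then show ?thesis using assms by (simp add: upd_def)
      next
        case 2 then show ?thesis using assms by (simp add: upd_def insert_commute)
      next
        case 3 then show ?thesis using pe by (simp add: upd_def)
      next
        case 4 then show ?thesis using pe by (simp add: upd_def insert_commute)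
      next
        case 5 then show ?thesis using a by (simp add: upd_def)
      qed
    qed
    show "upd p u v x \<in> V \<and> upd p u v x \<noteq> x \<and> upd p u v (upd p u v x) = x \<and> {x, upd p u v x} \<in> E"
      using i1 i2 i3 i4 by blast
  qed
qed


lemma upd_swap:
  assumes "good p" "u \<in> V" "v \<in> V" "u \<noteq> v" "x \<in> V"
  shows "upd p u v x = upd p v u x"
proof -
  have "p (p u) = u" "p (p v) = v" using assms unfolding good_def by auto
  then have "p u \<noteq> p v" using assms(4) by metis
  then show ?thesis unfolding upd_def by auto
qed

lemma upd_cong:
  assumes "\<And>y. y \<in> V \<Longrightarrow> q y = q' y" "a \<in> V" "b \<in> V" "x \<in> V"
  shows "upd q a b x = upd q' a b x"
  using assms unfolding upd_def by simp

lemma set_identity: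
  assumes g: "good p" and uv: "u \<in> V" "v \<in> V" "u \<noteq> v"
  shows "(mk V p - {{u, p u}, {v, p v}}) \<union> {{u, v}, {p u, p v}} = mk V (upd p u v)"
proof -
  have G: "\<And>x. x \<in> V \<Longrightarrow> p x \<in> V \<and> p x \<noteq> x \<and> p (p x) = x" using g unfolding good_def by blast
  have pu: "p u \<in> V" "p u \<noteq> u" "p (p u) = u" using G uv by auto
  have pv: "p v \<in> V" "p v \<noteq> v" "p (p v) = v" using G uv by auto
  have ne: "p u \<noteq> p v" using pu pv uv by metis
  have upu: "upd p u v (p u) = p v"
    unfolding upd_def using pu pv by (cases "p u = v") auto
  show ?thesis
  proof
    show "(mk V p - {{u, p u}, {v, p v}}) \<union> {{u, v}, {p u, p v}} \<subseteq> mk V (upd p u v)"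
    proof
      fix e assume e: "e \<in> (mk V p - {{u, p u}, {v, p v}}) \<union> {{u, v}, {p u, p v}}"
      show "e \<in> mk V (upd p u v)"
      proof (cases "e = {u, v}")
        case True
        then show ?thesis using uv unfolding mk_def upd_def by force
      next
        case F1: False
        show ?thesis
        proof (cases "e = {p u, p v}")
          case True
          then show ?thesis using pu upu unfolding mk_def by force
        next
          case False
          with F1 e obtain x where x: "x \<in> V" "e = {x, p x}" "e \<noteq> {u, p u}" "e \<noteq> {v, p v}"
            unfolding mk_def by blast
          have "x \<noteq> u" "x \<noteq> v" using x by auto
          moreover have "x \<noteq> p u" using x pu by (auto simp: insert_commute)
          moreover have "x \<noteq> p v" using x pv by (auto simp: insert_commute)
          ultimately have "upd p u v x = p x" unfolding upd_def by simp
          then show ?thesis using x unfolding mk_def by force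
        qed
      qed
    qed
    show "mk V (upd p u v) \<subseteq> (mk V p - {{u, p u}, {v, p v}}) \<union> {{u, v}, {p u, p v}}"
    proof
      fix e assume "e \<in> mk V (upd p u v)"
      then obtain x where x: "x \<in> V" "e = {x, upd p u v x}" unfolding mk_def by blast
      consider "x = u" | "x = v" | "x = p u" | "x = p v" | "x \<noteq> u" "x \<noteq> v" "x \<noteq> p u" "x \<noteq> p v" by blast
      then show "e \<in> (mk V p - {{u, p u}, {v, p v}}) \<union> {{u, v}, {p u, p v}}"
      proof cases
        case 1 then show ?thesis using x by (simp add: upd_def)
      next
        case 2 then show ?thesis using x uv by (simp add: upd_def insert_commute)
      next
        case 3 then show ?thesis using x upu by simp
      next
        case 4
        have "upd p u v (p v) = p u"
          unfolding upd_def using pu pv ne by (cases "p v = u") auto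
        then show ?thesis using x 4 by (simp add: insert_commute)
      next
        case 5
        then have "upd p u v x = p x" unfolding upd_def by simp
        moreover have "{x, p x} \<noteq> {u, p u}" "{x, p x} \<noteq> {v, p v}"
          using 5 by (auto simp: doubleton_eq_iff)
        ultimately show ?thesis using x unfolding mk_def by auto
      qed
    qed
  qed
qed

lemma psi_edge_mk:
  assumes pm: "PM \<sigma>" and eE: "e \<in> E" and ab: "e = {a, b}" "a \<noteq> b"
  shows "psi_edge e \<sigma> = mk V (upd (partner \<sigma>) a b)"
proof -
  define u where "u = (SOME u. u \<in> e)"
  define v where "v = (SOME v. v \<in> e \<and> v \<noteq> u)"
  have u: "u \<in> e" unfolding u_def using ab by (metis insertI1 someI)
  have v: "v \<in> e \<and> v \<noteq> u" unfolding v_def using ab u by (smt (verit) insert_iff someI)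
  have abV: "a \<in> V" "b \<in> V" using E1[OF eE] ab by auto
  have uvV: "u \<in> V" "v \<in> V" using u v ab abV by auto
  define p where "p = partner \<sigma>"
  have g: "good p" unfolding p_def using pm_good[OF pm] .
  have h1: "psi_edge e \<sigma> = (\<sigma> - {{u, p u}, {v, p v}}) \<union> {{u, v}, {p u, p v}}"
    unfolding psi_edge_def Let_def u_def[symmetric] v_def[symmetric] p_def ..
  have e: "mk V p = \<sigma>" using pm_mk[OF pm] p_def by simp
  have h2: "(\<sigma> - {{u, p u}, {v, p v}}) \<union> {{u, v}, {p u, p v}} = mk V (upd p u v)"
  proof -
    have "u \<noteq> v" using v by auto
    from set_identity[OF g uvV this, unfolded e] show ?thesis .
  qed
  have h3: "mk V (upd p u v) = mk V (upd p a b)"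
  proof (rule mk_cong)
    fix x assume x: "x \<in> V"
    have "(u = a \<and> v = b) \<or> (u = b \<and> v = a)" using u v ab by auto
    then show "upd p u v x = upd p a b x" using upd_swap[OF g abV ab(2) x] by auto
  qed
  show ?thesis using h1 h2 h3 unfolding p_def by simp
qed

lemma psi_edge_pm:
  assumes pm: "PM \<sigma>" and eE: "e \<in> E"
  shows "PM (psi_edge e \<sigma>)"
proof -
  obtain a b where ab: "e = {a, b}" "a \<noteq> b" "a \<in> V" "b \<in> V" using E1[OF eE] by blast
  have "good (upd (partner \<sigma>) a b)" using upd_good[OF pm_good[OF pm]] eE ab by blast
  then show ?thesis using psi_edge_mk[OF pm eE ab(1,2)] mk_pm by simp
qed

lemma psi_edge_idem:
  assumes pm: "PM \<sigma>" and eE: "e \<in> E" and ein: "e \<in> \<sigma>"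
  shows "psi_edge e \<sigma> = \<sigma>"
proof -
  obtain a b where ab: "e = {a, b}" "a \<noteq> b" "a \<in> V" "b \<in> V" using E1[OF eE] by blast
  define p where "p = partner \<sigma>"
  have pa: "p a = b" unfolding p_def using pm_partner_eq[OF pm] ein ab by blast
  have pb: "p b = a" unfolding p_def using pm_partner_eq[OF pm] ein ab by (simp add: insert_commute)
  have "mk V (upd p a b) = mk V p"
    by (rule mk_cong) (use pa pb in \<open>auto simp: upd_def\<close>)
  then show ?thesis using psi_edge_mk[OF pm eE ab(1,2)] pm_mk[OF pm] unfolding p_def by simp
qed

lemma psi_edge_comm:
  assumes pm: "PM \<sigma>" and xE: "x \<in> E" and yE: "y \<in> E" and disj: "x \<inter> y = {}"
  shows "psi_edge x (psi_edge y \<sigma>) = psi_edge y (psi_edge x \<sigma>)"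
proof -
  obtain a b where ab: "x = {a, b}" "a \<noteq> b" "a \<in> V" "b \<in> V" using E1[OF xE] by blast
  obtain c d where cd: "y = {c, d}" "c \<noteq> d" "c \<in> V" "d \<in> V" using E1[OF yE] by blast
  define p where "p = partner \<sigma>"
  have g: "good p" unfolding p_def using pm_good[OF pm] .
  have g1: "good (upd p c d)" using upd_good[OF g] yE cd by blast
  have g2: "good (upd p a b)" using upd_good[OF g] xE ab by blast
  have s1: "psi_edge y \<sigma> = mk V (upd p c d)" using psi_edge_mk[OF pm yE cd(1,2)] p_def by simp
  have s2: "psi_edge x \<sigma> = mk V (upd p a b)" using psi_edge_mk[OF pm xE ab(1,2)] p_def by simp
  have pm1: "PM (mk V (upd p c d))" using mk_pm(1)[OF g1] .
  have pm2: "PM (mk V (upd p a b))" using mk_pm(1)[OF g2] .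
  have "psi_edge x (psi_edge y \<sigma>) = mk V (upd (partner (mk V (upd p c d))) a b)"
    using psi_edge_mk[OF pm1 xE ab(1,2)] s1 by simp
  also have "\<dots> = mk V (upd (upd p c d) a b)"
    by (rule mk_cong, rule upd_cong) (use mk_pm(2)[OF g1] ab in auto)
  also have "\<dots> = mk V (upd (upd p a b) c d)"
  proof (rule mk_cong)
    fix z assume z: "z \<in> V"
    have G: "\<And>x. x \<in> V \<Longrightarrow> p x \<in> V \<and> p x \<noteq> x \<and> p (p x) = x" using g unfolding good_def by blast
    have "p (p a) = a" "p (p b) = b" "p (p c) = c" "p (p d) = d" "p (p z) = z"
       "p a \<noteq> a" "p b \<noteq> b" "p c \<noteq> c" "p d \<noteq> d" "p z \<noteq> z"
      using G ab cd z by auto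
    moreover have "a \<noteq> c" "a \<noteq> d" "b \<noteq> c" "b \<noteq> d" using disj ab cd by auto
    ultimately show "upd (upd p c d) a b z = upd (upd p a b) c d z"
      using ab(2) cd(2) unfolding upd_def by (smt (verit))
  qed
  also have "\<dots> = mk V (upd (partner (mk V (upd p a b))) c d)"
    by (rule mk_cong, rule upd_cong) (use mk_pm(2)[OF g2] cd in auto)
  also have "\<dots> = psi_edge y (psi_edge x \<sigma>)"
    using psi_edge_mk[OF pm2 yE cd(1,2)] s2 by simp
  finally show ?thesis .
qed

end

context mg begin


lemma fold_pm: "set xs \<subseteq> E \<Longrightarrow> PM \<sigma> \<Longrightarrow> PM (fold psi_edge xs \<sigma>)"
  by (induction xs arbitrary: \<sigma>) (auto simp: psi_edge_pm)

lemma matchingD: "matching E S \<Longrightarrow> x \<in> S \<Longrightarrow> y \<in> S \<Longrightarrow> x \<noteq> y \<Longrightarrow> x \<inter> y = {}"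
  unfolding matching_def by blast

lemma matchingE: "matching E S \<Longrightarrow> x \<in> S \<Longrightarrow> x \<in> E"
  unfolding matching_def by blast

lemma comm_S:
  assumes "matching E S" "x \<in> S" "y \<in> S" "PM \<sigma>"
  shows "psi_edge x (psi_edge y \<sigma>) = psi_edge y (psi_edge x \<sigma>)"
  using psi_edge_comm[OF assms(4) matchingE[OF assms(1,2)] matchingE[OF assms(1,3)]]
    matchingD[OF assms(1,2,3)] by (cases "x = y") auto

lemma fold_A:
  assumes S: "matching E S" and "x \<in> S"
  shows "set xs \<subseteq> S \<Longrightarrow> PM \<sigma> \<Longrightarrow> fold psi_edge xs (psi_edge x \<sigma>) = psi_edge x (fold psi_edge xs \<sigma>)"
proof (induction xs arbitrary: \<sigma>)
  case Nil then show ?case by simp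
next
  case (Cons y ys)
  have yS: "y \<in> S" using Cons by simp
  have "fold psi_edge (y # ys) (psi_edge x \<sigma>) = fold psi_edge ys (psi_edge y (psi_edge x \<sigma>))" by simp
  also have "\<dots> = fold psi_edge ys (psi_edge x (psi_edge y \<sigma>))"
    using comm_S[OF S yS \<open>x \<in> S\<close> Cons.prems(2)] by simp
  also have "\<dots> = psi_edge x (fold psi_edge ys (psi_edge y \<sigma>))"
    using Cons.IH Cons.prems psi_edge_pm matchingE[OF S yS] by simp
  finally show ?case by simp
qed

lemma fold_B:
  assumes S: "matching E S" and xs: "set xs \<subseteq> S" and x: "x \<in> set xs" and pm: "PM \<sigma>"
  shows "psi_edge x (fold psi_edge xs \<sigma>) = fold psi_edge xs \<sigma>"
proof -
  obtain ys zs where xs_eq: "xs = ys @ x # zs" using split_list[OF x] by blast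
  have xS: "x \<in> S" using x xs by blast
  have SE: "S \<subseteq> E" using S unfolding matching_def by blast
  let ?t = "fold psi_edge ys \<sigma>"
  have pmt: "PM ?t" using fold_pm[OF _ pm, of ys] xs xs_eq SE by auto
  have pmt2: "PM (psi_edge x ?t)" using psi_edge_pm[OF pmt] xS SE by blast
  have zsS: "set zs \<subseteq> S" using xs xs_eq by auto
  have "psi_edge x (fold psi_edge xs \<sigma>) = psi_edge x (fold psi_edge zs (psi_edge x ?t))"
    using xs_eq by simp
  also have "\<dots> = fold psi_edge zs (psi_edge x (psi_edge x ?t))"
    using fold_A[OF S xS zsS pmt2] by simp
  also have "psi_edge x (psi_edge x ?t) = psi_edge x ?t"
  proof -
    have xE: "x \<in> E" using xS SE by blast
    obtain a b where ab: "x = {a, b}" "a \<noteq> b" using E1[OF xE] by blast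
    show ?thesis using psi_edge_idem[OF pmt2 xE psi_edge_contains[OF ab]] .
  qed
  finally show ?thesis using xs_eq by simp
qed

lemma fold_R:
  assumes S: "matching E S"
  shows "set xs \<subseteq> S \<Longrightarrow> PM \<sigma> \<Longrightarrow> fold psi_edge xs \<sigma> = fold psi_edge (remdups xs) \<sigma>"
proof (induction xs arbitrary: \<sigma>)
  case Nil then show ?case by simp
next
  case (Cons x xs)
  have SE: "S \<subseteq> E" using S unfolding matching_def by blast
  have xS: "x \<in> S" using Cons by simp
  show ?case
  proof (cases "x \<in> set xs")
    case True
    have "fold psi_edge (x # xs) \<sigma> = fold psi_edge xs (psi_edge x \<sigma>)" by simp
    also have "\<dots> = psi_edge x (fold psi_edge xs \<sigma>)" using fold_A[OF S xS] Cons.prems by simp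
    also have "\<dots> = fold psi_edge xs \<sigma>" using fold_B[OF S _ True Cons.prems(2)] Cons.prems by simp
    also have "\<dots> = fold psi_edge (remdups xs) \<sigma>" using Cons by simp
    finally show ?thesis using True by simp
  next
    case False
    have pm': "PM (psi_edge x \<sigma>)" using psi_edge_pm[OF Cons.prems(2)] xS SE by blast
    then show ?thesis using False Cons.IH[OF _ pm'] Cons.prems by simp
  qed
qed

lemma fold_D:
  assumes S: "matching E S"
  shows "distinct xs \<Longrightarrow> distinct ys \<Longrightarrow> set xs = set ys \<Longrightarrow> set xs \<subseteq> S \<Longrightarrow> PM \<sigma>
    \<Longrightarrow> fold psi_edge xs \<sigma> = fold psi_edge ys \<sigma>"
proof (induction xs arbitrary: ys \<sigma>)
  case Nil then show ?case by simp
next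
  case (Cons x xs)
  have d1: "distinct xs" "x \<notin> set xs" using Cons.prems(1) by auto
  have d2: "distinct ys" using Cons.prems(2) .
  have st: "insert x (set xs) = set ys" using Cons.prems(3) by simp
  have sS: "insert x (set xs) \<subseteq> S" using Cons.prems(4) by simp
  have pm: "PM \<sigma>" using Cons.prems(5) .
  have SE: "S \<subseteq> E" using S unfolding matching_def by blast
  have xS: "x \<in> S" using sS by blast
  have "x \<in> set ys" using st by blast
  then obtain ys1 ys2 where ys: "ys = ys1 @ x # ys2" using split_list[of x ys] by blast
  have pm': "PM (psi_edge x \<sigma>)" using psi_edge_pm[OF pm, of x] xS SE by blast
  have nx: "x \<notin> set ys1" "x \<notin> set ys2" using d2 unfolding ys by simp_all
  have s12: "set (ys1 @ ys2) = set xs"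
  proof -
    have a1: "set xs = set ys - {x}" using st d1(2) by blast
    have a2: "set ys - {x} = set (ys1 @ ys2)" using nx unfolding ys by auto
    show ?thesis using a1 a2 by simp
  qed
  have s12S: "set ys1 \<subseteq> S" using s12 sS by auto
  have "fold psi_edge ys \<sigma> = fold psi_edge ys2 (psi_edge x (fold psi_edge ys1 \<sigma>))" using ys by simp
  also have "\<dots> = fold psi_edge ys2 (fold psi_edge ys1 (psi_edge x \<sigma>))"
    using fold_A[OF S xS s12S pm] by simp
  also have "\<dots> = fold psi_edge (ys1 @ ys2) (psi_edge x \<sigma>)" by simp
  also have "\<dots> = fold psi_edge xs (psi_edge x \<sigma>)"
  proof (rule sym, rule Cons.IH[OF d1(1) _ _ _ pm'])
    show "distinct (ys1 @ ys2)" using d2 ys by simp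
    show "set xs = set (ys1 @ ys2)" using s12 by simp
    show "set xs \<subseteq> S" using sS by simp
  qed
  finally show ?case by simp
qed

lemma fold_C:
  assumes S: "matching E S" and st: "set xs = set ys" and sS: "set xs \<subseteq> S" and pm: "PM \<sigma>"
  shows "fold psi_edge xs \<sigma> = fold psi_edge ys \<sigma>"
proof -
  have ysS: "set ys \<subseteq> S" using st sS by simp
  have "fold psi_edge xs \<sigma> = fold psi_edge (remdups xs) \<sigma>" using fold_R[OF S sS pm] .
  also have "\<dots> = fold psi_edge (remdups ys) \<sigma>"
    by (rule fold_D[OF S]) (use st sS pm in auto)
  also have "\<dots> = fold psi_edge ys \<sigma>" using fold_R[OF S ysS pm] by simp
  finally show ?thesis .
qed

lemma fold_contains:
  assumes M: "matching E M"
  shows "distinct xs \<Longrightarrow> set xs \<subseteq> M \<Longrightarrow> set xs \<subseteq> fold psi_edge xs \<sigma>"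
proof (induction xs rule: rev_induct)
  case Nil then show ?case by simp
next
  case (snoc x xs)
  have xE: "x \<in> E" using snoc M unfolding matching_def by auto
  obtain a b where ab: "x = {a, b}" "a \<noteq> b" using E1[OF xE] by blast
  have "x \<in> fold psi_edge (xs @ [x]) \<sigma>" using psi_edge_contains[OF ab] by simp
  moreover have "y \<in> fold psi_edge (xs @ [x]) \<sigma>" if y: "y \<in> set xs" for y
  proof -
    have "y \<noteq> x" using snoc.prems y by auto
    then have "y \<inter> x = {}" using matchingD[OF M] snoc.prems y by auto
    moreover have "y \<in> fold psi_edge xs \<sigma>" using snoc y by auto
    ultimately show ?thesis using psi_edge_keeps[OF ab] by simp
  qed
  ultimately show ?case by auto
qed

lemma psi_fold:
  assumes "matching E M"
  shows "\<exists>es. set es = M \<and> distinct es \<and> psi M \<sigma> = fold psi_edge es \<sigma>"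
proof -
  have "finite M" using assms finE unfolding matching_def by (meson finite_subset)
  then have ex: "\<exists>es. set es = M \<and> distinct es" using finite_distinct_list by blast
  let ?es = "SOME es. set es = M \<and> distinct es"
  have "set ?es = M \<and> distinct ?es" using someI_ex[OF ex] .
  then show ?thesis unfolding psi_def psi_list_def by blast
qed

lemma psi_contains: assumes "matching E M" shows "M \<subseteq> psi M \<sigma>"
proof -
  obtain es where es: "set es = M" "distinct es" "psi M \<sigma> = fold psi_edge es \<sigma>"
    using psi_fold[OF assms] by blast
  show ?thesis using fold_contains[OF assms es(2), of \<sigma>] es by simp
qed

lemma psi_pm: assumes "matching E M" "PM \<sigma>" shows "PM (psi M \<sigma>)"
proof -
  obtain es where es: "set es = M" "distinct es" "psi M \<sigma> = fold psi_edge es \<sigma>"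
    using psi_fold[OF assms(1)] by blast
  have "set es \<subseteq> E" using es assms(1) unfolding matching_def by blast
  then show ?thesis using fold_pm[OF _ assms(2)] es by simp
qed

lemma psi_comm:
  assumes "PM \<sigma>" "matching E M" "matching E M'" "matching E (M \<union> M')"
  shows "psi M (psi M' \<sigma>) = psi M' (psi M \<sigma>)"
proof -
  have ex: "\<exists>es. set es = M \<and> distinct es" if "matching E M" for M
  proof -
    have "finite M" using that finE unfolding matching_def by (meson finite_subset)
    then show ?thesis using finite_distinct_list by blast
  qed
  define es where "es = (SOME es. set es = M \<and> distinct es)"
  define es' where "es' = (SOME es. set es = M' \<and> distinct es)"
  have es: "set es = M" "distinct es" "\<And>\<tau>. psi M \<tau> = fold psi_edge es \<tau>"
    using someI_ex[OF ex[OF assms(2)]] unfolding es_def psi_def psi_list_def by auto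
  have es': "set es' = M'" "distinct es'" "\<And>\<tau>. psi M' \<tau> = fold psi_edge es' \<tau>"
    using someI_ex[OF ex[OF assms(3)]] unfolding es'_def psi_def psi_list_def by auto
  have "psi M (psi M' \<sigma>) = fold psi_edge (es' @ es) \<sigma>" using es es' by simp
  also have "\<dots> = fold psi_edge (es @ es') \<sigma>"
    using fold_C[OF assms(4), of "es' @ es" "es @ es'"] es es' assms(1) by auto
  also have "\<dots> = psi M' (psi M \<sigma>)" using es es' by simp
  finally show ?thesis .
qed

lemma psi_keeps:
  assumes "matching E (M \<union> M')" "M' \<subseteq> \<sigma>"
  shows "M' \<subseteq> psi M \<sigma>"
proof -
  have mM: "matching E M" using assms(1) unfolding matching_def by blast
  obtain es where es: "set es = M" "psi M \<sigma> = fold psi_edge es \<sigma>"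
    using psi_fold[OF mM] by blast
  have "set xs \<subseteq> M \<Longrightarrow> M' \<subseteq> \<tau> \<Longrightarrow> M' \<subseteq> fold psi_edge xs \<tau>" for xs \<tau>
  proof (induction xs arbitrary: \<tau>)
    case Nil then show ?case by simp
  next
    case (Cons x xs)
    have xE: "x \<in> E" using Cons mM unfolding matching_def by auto
    obtain a b where ab: "x = {a, b}" "a \<noteq> b" using E1[OF xE] by blast
    have "M' \<subseteq> psi_edge x \<tau>"
    proof
      fix y assume y: "y \<in> M'"
      show "y \<in> psi_edge x \<tau>"
      proof (cases "y = x")
        case True then show ?thesis using psi_edge_contains[OF ab] by simp
      next
        case False
        then have "y \<inter> x = {}" using matchingD[OF assms(1)] y Cons.prems by auto
        then show ?thesis using psi_edge_keeps[OF ab] y Cons.prems by blast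
      qed
    qed
    then show ?case using Cons by simp
  qed
  then show ?thesis using es assms(2) by simp
qed


end

lemma P1_mg: assumes "finite V" "P1_graph V E" shows "mg V E"
proof
  show "finite V" by fact
  have E: "E = {{u, v} | u v. u \<in> V \<and> v \<in> V \<and> u \<noteq> v}" using assms(2) unfolding P1_graph_def .
  show "\<And>e. e \<in> E \<Longrightarrow> \<exists>a b. e = {a, b} \<and> a \<noteq> b \<and> a \<in> V \<and> b \<in> V" unfolding E by blast
  fix x u v y assume h: "{x, u} \<in> E" "{u, v} \<in> E" "{v, y} \<in> E" "x \<noteq> v" "u \<noteq> y" "x \<noteq> y"
  have "x \<in> V" using h(1) unfolding E by (auto simp: doubleton_eq_iff)
  moreover have "y \<in> V" using h(3) unfolding E by (auto simp: doubleton_eq_iff)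
  ultimately show "{x, y} \<in> E" unfolding E using h(6) by blast
qed

lemma P2_mg: assumes "finite V" "P2_graph V E" shows "mg V E"
proof -
  obtain r :: nat and A B where
    AB: "\<forall>i<r. A i \<noteq> {} \<and> B i \<noteq> {} \<and> card (A i) = card (B i)"
    and disj: "\<forall>i<r. \<forall>j<r. A i \<inter> B j = {} \<and> (i \<noteq> j \<longrightarrow> A i \<inter> A j = {} \<and> B i \<inter> B j = {})"
    and V: "V = (\<Union>i<r. A i \<union> B i)"
    and E: "E = {{u, v} | u v i. i < r \<and> u \<in> A i \<and> v \<in> B i}"
    using assms(2) unfolding P2_graph_def by blast
  have edge: "\<exists>i<r. (x \<in> A i \<and> u \<in> B i) \<or> (x \<in> B i \<and> u \<in> A i)" if "{x, u} \<in> E" for x u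
    using that unfolding E by (auto simp: doubleton_eq_iff)
  show ?thesis
  proof
    show "finite V" by fact
    show "\<And>e. e \<in> E \<Longrightarrow> \<exists>a b. e = {a, b} \<and> a \<noteq> b \<and> a \<in> V \<and> b \<in> V"
      unfolding E V using disj by blast
    fix x u v y assume h: "{x, u} \<in> E" "{u, v} \<in> E" "{v, y} \<in> E" "x \<noteq> v" "u \<noteq> y" "x \<noteq> y"
    obtain i where i: "i < r" "(x \<in> A i \<and> u \<in> B i) \<or> (x \<in> B i \<and> u \<in> A i)" using edge[OF h(1)] by blast
    obtain j where j: "j < r" "(u \<in> A j \<and> v \<in> B j) \<or> (u \<in> B j \<and> v \<in> A j)" using edge[OF h(2)] by blast
    obtain k where k: "k < r" "(v \<in> A k \<and> y \<in> B k) \<or> (v \<in> B k \<and> y \<in> A k)" using edge[OF h(3)] by blast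
    have ij: "i = j" and jk: "j = k" using i j k disj by blast+
    have "(x \<in> A i \<and> y \<in> B i) \<or> (x \<in> B i \<and> y \<in> A i)" using i j k ij jk disj by blast
    then show "{x, y} \<in> E" unfolding E using i(1) by (auto simp: insert_commute)
  qed
qed

theorem proposition6:
  fixes V :: "'a set" and E :: "'a set set" and n :: nat and F :: "'a set set set"
  assumes "finite V" and "card V = 2 * n"
    and "P1_graph V E \<or> P2_graph V E"
    and "F \<subseteq> {M. matching E M \<and> flaw V E M \<noteq> {}}"
  shows
    "(\<forall>M \<sigma> es. matching E M \<longrightarrow> perfect_matching V E \<sigma> \<longrightarrow> distinct es \<longrightarrow> set es = M \<longrightarrow>
        (\<forall>i\<in>{1..length es}. set (take i es) \<subseteq> psi_list (take i es) \<sigma>) \<and> M \<subseteq> psi M \<sigma>)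
     \<and> (\<forall>\<sigma> M M'. perfect_matching V E \<sigma> \<longrightarrow> matching E M \<longrightarrow> matching E M' \<longrightarrow>
          matching E (M \<union> M') \<longrightarrow> psi M (psi M' \<sigma>) = psi M' (psi M \<sigma>))
     \<and> weakly_commutative (mstep V E) F (dep E)
     \<and> potential_causality_graph (mstep V E) (flaw V E) F (dep E)"
proof -
  interpret mg V E using assms(1,3) P1_mg P2_mg by blast
  have FM: "\<And>f. f \<in> F \<Longrightarrow> matching E f" using assms(4) by blast
  have A: "\<forall>M \<sigma> es. matching E M \<longrightarrow> perfect_matching V E \<sigma> \<longrightarrow> distinct es \<longrightarrow> set es = M \<longrightarrow>
        (\<forall>i\<in>{1..length es}. set (take i es) \<subseteq> psi_list (take i es) \<sigma>) \<and> M \<subseteq> psi M \<sigma>"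
  proof (intro allI impI conjI ballI)
    fix M \<sigma> es i assume h: "matching E M" "distinct es" "set es = M"
    have "distinct (take i es)" using h(2) by simp
    moreover have "set (take i es) \<subseteq> M" using h(3) set_take_subset by metis
    ultimately show "set (take i es) \<subseteq> psi_list (take i es) \<sigma>"
      unfolding psi_list_def using fold_contains[OF h(1)] by blast
  next
    fix M \<sigma> es assume h: "matching E M"
    show "M \<subseteq> psi M \<sigma>" using psi_contains[OF h] .
  qed
  have B: "\<forall>\<sigma> M M'. perfect_matching V E \<sigma> \<longrightarrow> matching E M \<longrightarrow> matching E M' \<longrightarrow>
          matching E (M \<union> M') \<longrightarrow> psi M (psi M' \<sigma>) = psi M' (psi M \<sigma>)"
    using psi_comm by blast
  have C: "weakly_commutative (mstep V E) F (dep E)"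
    unfolding weakly_commutative_def Let_def
  proof (intro exI conjI)
    let ?W = "{(s1, f, s2, g, s3). f \<in> F \<and> g \<in> F \<and> \<not> dep E f g \<and> mstep V E s1 f s2 \<and> mstep V E s2 g s3}"
    let ?\<Phi> = "\<lambda>(s1, f, s2, g, s3). (s1, g, psi f s3, f, s3)"
    show "inj_on ?\<Phi> ?W"
    proof (rule inj_onI)
      fix t t' assume t: "t \<in> ?W" and t': "t' \<in> ?W" and eq: "?\<Phi> t = ?\<Phi> t'"
      obtain s1 f s2 g s3 where tt: "t = (s1, f, s2, g, s3)" by (cases t) auto
      obtain s1' f' s2' g' s3' where tt': "t' = (s1', f', s2', g', s3')" by (cases t') auto
      have e: "s1 = s1'" "g = g'" "f = f'" "s3 = s3'" using eq tt tt' by auto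
      have "s2 = psi g s3" using t tt unfolding mstep_def resample_set_def by auto
      moreover have "s2' = psi g' s3'" using t' tt' unfolding mstep_def resample_set_def by auto
      ultimately show "t = t'" using tt tt' e by simp
    qed
    show "\<forall>(s1, f, s2, g, s3) \<in> ?W. \<exists>s2'. ?\<Phi> (s1, f, s2, g, s3) = (s1, g, s2', f, s3) \<and>
              mstep V E s1 g s2' \<and> mstep V E s2' f s3"
    proof (intro ballI, clarify)
      fix s1 f s2 g s3
      assume fF: "f \<in> F" and gF: "g \<in> F" and nd: "\<not> dep E f g"
        and st1: "mstep V E s1 f s2" and st2: "mstep V E s2 g s3"
      have mf: "matching E f" and mg': "matching E g" using FM fF gF by auto
      have mfg: "matching E (f \<union> g)" using nd unfolding dep_def by blast
      have pm3: "PM s3" and s2e: "psi g s3 = s2" using st2 unfolding mstep_def resample_set_def by auto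
      have pm1: "PM s1" and s1e: "psi f s2 = s1" using st1 unfolding mstep_def resample_set_def flaw_def by auto
      have comm: "psi g (psi f s3) = s1" using psi_comm[OF pm3 mf mg' mfg] s2e s1e by simp
      have "mstep V E s1 g (psi f s3)"
        unfolding mstep_def flaw_def resample_set_def
        using pm1 comm psi_contains[OF mg', of "psi f s3"] psi_pm[OF mf pm3] by auto
      moreover have "mstep V E (psi f s3) f s3"
        unfolding mstep_def flaw_def resample_set_def
        using pm3 psi_contains[OF mf, of s3] psi_pm[OF mf pm3] by auto
      ultimately show "\<exists>s2'. (s1, g, psi f s3, f, s3) = (s1, g, s2', f, s3) \<and>
              mstep V E s1 g s2' \<and> mstep V E s2' f s3" by blast
    qed
  qed
  have D: "potential_causality_graph (mstep V E) (flaw V E) F (dep E)"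
    unfolding potential_causality_graph_def
  proof (intro ballI allI impI subsetI)
    fix f s s' g assume fF: "f \<in> F" and st: "mstep V E s f s'" and g: "g \<in> {g \<in> F. s' \<in> flaw V E g}"
    show "g \<in> ({g \<in> F. s \<in> flaw V E g} - {f}) \<union> {g. dep E f g}"
    proof (cases "dep E f g")
      case True then show ?thesis by blast
    next
      case False
      then have mfg: "matching E (f \<union> g)" and ne: "f \<noteq> g" unfolding dep_def by auto
      have pm: "PM s" and se: "psi f s' = s" using st unfolding mstep_def resample_set_def flaw_def by auto
      have "g \<subseteq> s'" using g unfolding flaw_def by blast
      then have "g \<subseteq> s" using psi_keeps[OF mfg] se by blast
      then show ?thesis using pm g ne unfolding flaw_def by auto
    qed
  qed
  show ?thesis using A B C D by blast
qed

end
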